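(* The dynamical system $(X,T)$ is topologically mixing: for any nonempty open sets $U,V\subset X$ there is $N$ such that $T^n(U)\cap V\neq\emptyset$ for all $n\geq N$.
   Context: Paths and cycles: a graph is $G=(V,E)$ with $V$ finite and $E\subset V\times V$. A path is a finite sequence of vertices $(u_0,\dots,u_L)$ with $(u_j,u_{j+1})\in E$; its length is $|\cdot|=L$; a cycle is a path with $u_0=u_L$. For paths where one ends where the next starts, $+$ denotes concatenation and $a\,c$ means the cycle $c$ traversed $a$ times. Construction: $G_0=(V_0,E_0)$ with $V_0=\{v_{0,0}\}$, $E_0=\{e_{0,0}\}$, $e_{0,0}=(v_{0,0},v_{0,0})$. For $n\geq1$, $G_n=(V_n,E_n)$ consists of a vertex $v_{n,0}$, the loop $e_{n,0}=(v_{n,0},v_{n,0})$, and $n$ cycles $c_{n,1},\dots,c_{n,n}$, each starting and ending at $v_{n,0}$, whose vertices other than $v_{n,0}$ are pairwise distinct (within each cycle and across cycles); $V_n$ is the set of all these vertices and $E_n$ consists of $e_{n,0}$ and the edges of the cycles. The maps $\varphi_n\colon V_{n+1}\to V_n$ and the lengths of the cycles $c_{n+1,i}$ are defined together: $\varphi_n(v_{n+1,0})=v_{n,0}$, and for each $i$ a path $P_{n,i}$ in $G_n$ from $v_{n,0}$ to $v_{n,0}$ is given; $c_{n+1,i}$ has length $|P_{n,i}|$ and $\varphi_n$ maps its $j$-th vertex to the $j$-th vertex of $P_{n,i}$ (written $\varphi_n(c_{n+1,i})=P_{n,i}$). The paths are: $P_{0,1}=10\,e_{0,0}$; for $n\geq1$: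 $P_{n,i}=e_{n,0}+2c_{n,i}+2c_{n,i+1}+\dots+2c_{n,n}+e_{n,0}$ for $2\leq i\leq n$; $P_{n,n+1}=(n+2)^2\big(\sum_{i=1}^n|c_{n,i}|\big)\,e_{n,0}$; and $P_{n,1}=(1\,e_{n,0}+2c_{n,1})+(2\,e_{n,0}+2c_{n,1})+\dots+(k_n\,e_{n,0}+2c_{n,1})+e_{n,0}+2c_{n,2}+\dots+2c_{n,n}+e_{n,0}$, where $k_n=2\big(1+\sum_{i=1}^n|c_{n,i}|\big)$. Let $X=\{x\in\prod_{n\geq0}V_n:\varphi_n(x_{n+1})=x_n\ \forall n\}$ with metric $d(x,y)=2^{-\min\{i:x_i\neq y_i\}}$ ($d(x,x)=0$); $X$ is a compact zero-dimensional metric space, and $T\colon X\to X$ defined by $T(x)=y$ iff $(x_n,y_n)\in E_n$ for all $n$ is a well-defined homeomorphism. Write $x_n$ for the $n$-th coordinate of $x$. *)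

theory Defs
  imports Complex_Main
begin

text \<open>Vertices of every graph G_n: Base is v_{n,0}; CV i j is the j-th vertex
(0 < j < |c_{n,i}|) of the cycle c_{n,i}.  Paths are lists of vertices
(a path of length L is a list of L+1 vertices).\<close>

datatype vtx = Base | CV nat nat

definition pcat :: "vtx list \<Rightarrow> vtx list \<Rightarrow> vtx list" where
  "pcat p q = p @ tl q"

definition loop :: "vtx list" where
  "loop = [Base, Base]"

primrec rep :: "nat \<Rightarrow> vtx list \<Rightarrow> vtx list" where
  "rep 0 c = [Base]"
| "rep (Suc a) c = pcat c (rep a c)"

primrec pcats :: "vtx list list \<Rightarrow> vtx list" where
  "pcats [] = [Base]"
| "pcats (p # ps) = pcat p (pcats ps)"

definition cyc :: "(nat \<Rightarrow> nat) \<Rightarrow> nat \<Rightarrow> vtx list" where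
  "cyc L i = Base # map (CV i) [1..<L i] @ [Base]"

definition Pgen :: "(nat \<Rightarrow> nat) \<Rightarrow> nat \<Rightarrow> nat \<Rightarrow> vtx list" where
  "Pgen L n i =
     (if n = 0 then rep 10 loop
      else if i = 1 then
        pcats (map (\<lambda>a. pcat (rep a loop) (rep 2 (cyc L 1)))
                   [1..<2 * (1 + (\<Sum>j=1..n. L j)) + 1]
               @ [loop] @ map (\<lambda>j. rep 2 (cyc L j)) [2..<n+1] @ [loop])
      else if i = n + 1 then rep ((n + 2)^2 * (\<Sum>j=1..n. L j)) loop
      else pcats ([loop] @ map (\<lambda>j. rep 2 (cyc L j)) [i..<n+1] @ [loop]))"

text \<open>clen n i = |c_{n,i}| (for 1 \<le> i \<le> n)\<close>
primrec clen :: "nat \<Rightarrow> nat \<Rightarrow> nat" where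
  "clen 0 i = 0"
| "clen (Suc n) i = length (Pgen (clen n) n i) - 1"

definition P :: "nat \<Rightarrow> nat \<Rightarrow> vtx list" where
  "P n i = Pgen (clen n) n i"

definition V :: "nat \<Rightarrow> vtx set" where
  "V n = insert Base {CV i j | i j. 1 \<le> i \<and> i \<le> n \<and> 0 < j \<and> j < clen n i}"

definition E :: "nat \<Rightarrow> (vtx \<times> vtx) set" where
  "E n = insert (Base, Base)
     (\<Union>i\<in>{1..n}. set (zip (cyc (clen n) i) (tl (cyc (clen n) i))))"

fun phi :: "nat \<Rightarrow> vtx \<Rightarrow> vtx" where
  "phi n Base = Base"
| "phi n (CV i j) = P n i ! j"

definition Xsp :: "(nat \<Rightarrow> vtx) set" where
  "Xsp = {x. (\<forall>n. x n \<in> V n) \<and> (\<forall>n. phi n (x (Suc n)) = x n)}"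

definition dist_X :: "(nat \<Rightarrow> vtx) \<Rightarrow> (nat \<Rightarrow> vtx) \<Rightarrow> real" where
  "dist_X x y = (if x = y then 0 else 2 powr (- real (LEAST i. x i \<noteq> y i)))"

definition open_X :: "(nat \<Rightarrow> vtx) set \<Rightarrow> bool" where
  "open_X U \<longleftrightarrow> U \<subseteq> Xsp \<and>
     (\<forall>x\<in>U. \<exists>e>0. \<forall>y\<in>Xsp. dist_X x y < e \<longrightarrow> y \<in> U)"

definition T :: "(nat \<Rightarrow> vtx) \<Rightarrow> (nat \<Rightarrow> vtx)" where
  "T x = (THE y. y \<in> Xsp \<and> (\<forall>n. (x n, y n) \<in> E n))"

end

theory Submission
  imports Defs
begin


lemma rep_loop: "rep a loop = replicate (Suc a) Base"
  by (induction a) (auto simp: pcat_def loop_def)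

lemma rep2: "rep 2 c = c @ tl c"
  by (simp add: numeral_2_eq_2 pcat_def)

lemma last_tl': "tl xs \<noteq> [] \<Longrightarrow> last (tl xs) = last xs"
  by (cases xs) auto

definition good :: "vtx list \<Rightarrow> bool" where
  "good p \<longleftrightarrow> p \<noteq> [] \<and> hd p = Base \<and> last p = Base"

lemma pcats_good:
  assumes "\<forall>p\<in>set ps. good p"
  shows "pcats ps \<noteq> [] \<and> hd (pcats ps) = Base \<and> last (pcats ps) = Base"
  using assms by (induction ps) (auto simp: pcat_def good_def last_append last_tl')

lemma pcats_Cons: "pcats (p # ps) = p @ tl (pcats ps)"
  by (simp add: pcat_def)

lemma pcats_append:
  assumes "\<forall>p\<in>set (A @ Z). good p"
  shows "pcats (A @ Z) = pcats A @ tl (pcats Z)"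
  using assms
proof (induction A)
  case Nil
  then have "pcats Z \<noteq> [] \<and> hd (pcats Z) = Base" using pcats_good by auto
  then show ?case by (cases "pcats Z") auto
next
  case (Cons p A)
  then have "pcats A \<noteq> []" using pcats_good by auto
  with Cons show ?case by (simp add: pcat_def)
qed

lemma pcats_length:
  assumes "\<forall>p\<in>set ps. p \<noteq> []"
  shows "length (pcats ps) = 1 + sum_list (map (\<lambda>p. length p - 1) ps)"
  using assms
proof (induction ps)
  case Nil then show ?case by simp
next
  case (Cons p ps)
  have "pcats ps \<noteq> []"
  proof (cases ps)
    case Nil then show ?thesis by simp
  next
    case (Cons q qs) with \<open>\<forall>p\<in>set (p # ps). p \<noteq> []\<close> show ?thesis by (simp add: pcat_def)
  qed
  with Cons show ?case by (simp add: pcat_def)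
qed

lemma cyc_length: "length (cyc L i) = max (L i) 1 + 1"
  by (simp add: cyc_def)

lemma cyc_nth: "t < length (cyc L i) \<Longrightarrow> cyc L i ! t = (if 0 < t \<and> t < L i then CV i t else Base)"
  by (auto simp: cyc_def nth_Cons nth_append split: nat.splits)

lemma cyc_good: "good (cyc L i)"
  by (simp add: cyc_def good_def)

lemma rep_good: "good c \<Longrightarrow> good (rep a c)"
  by (induction a) (auto simp: good_def pcat_def last_append last_tl')

lemma rep_length: "c \<noteq> [] \<Longrightarrow> length (rep a c) = 1 + a * (length c - 1)"
  by (induction a) (auto simp: pcat_def)

lemma loop_good: "good loop" by (simp add: good_def loop_def)

lemma rep_pcats: "rep a c = pcats (replicate a c)"
  by (induction a) auto

lemma pcats_concat:
  assumes "\<forall>xs\<in>set xss. \<forall>p\<in>set xs. good p"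
  shows "pcats (map pcats xss) = pcats (concat xss)"
  using assms
proof (induction xss)
  case Nil then show ?case by (simp add: pcat_def)
next
  case (Cons xs xss)
  then have "pcats (xs @ concat xss) = pcats xs @ tl (pcats (concat xss))"
    by (intro pcats_append) auto
  with Cons show ?case by (simp add: pcat_def)
qed

lemma pcats_succ:
  assumes "\<forall>p\<in>set ps. good p \<and> successively R p" and "R Base Base"
  shows "successively R (pcats ps)"
  using assms
proof (induction ps)
  case Nil then show ?case by simp
next
  case (Cons p ps)
  let ?Q = "pcats ps"
  have Q: "?Q \<noteq> [] \<and> hd ?Q = Base" using pcats_good Cons.prems by auto
  have sQ: "successively R ?Q" using Cons by auto
  then have sQ': "successively R (tl ?Q)" using Q by (cases ?Q) (auto simp: successively_Cons)
  have "tl ?Q \<noteq> [] \<Longrightarrow> R (last p) (hd (tl ?Q))"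
    using sQ Q Cons.prems by (cases ?Q) (auto simp: successively_Cons good_def)
  then show ?case using Cons.prems sQ' by (auto simp: pcat_def successively_append_iff)
qed

definition allowed :: "(nat \<Rightarrow> nat) \<Rightarrow> nat \<Rightarrow> vtx list \<Rightarrow> bool" where
  "allowed L n p \<longleftrightarrow> p = loop \<or> (\<exists>j. 1 \<le> j \<and> j \<le> n \<and> p = cyc L j)"

lemma allowed_good: "allowed L n p \<Longrightarrow> good p"
  by (auto simp: allowed_def loop_good cyc_good)

lemma rep_loop_flat: "rep (Suc N) loop = pcats (replicate N loop @ [loop])"
  by (simp only: rep_pcats replicate_append_same replicate_Suc)

lemma pcat_pcats: "\<forall>p\<in>set (A @ B). good p \<Longrightarrow> pcat (pcats A) (pcats B) = pcats (A @ B)"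
  by (simp add: pcats_append pcat_def)

lemma rep2_pcats: "rep 2 c = pcats [c, c]"
  by (simp add: numeral_2_eq_2 pcat_def)

lemma F_pcats: "good c \<Longrightarrow> pcat (rep a loop) (rep 2 c) = pcats (replicate a loop @ [c, c])"
  by (subst rep2_pcats, subst rep_pcats, rule pcat_pcats) (auto simp: loop_good)

lemma Pgen_flat:
  assumes "n = 0 \<or> (1 \<le> i \<and> i \<le> n + 1)" and "n \<ge> 1 \<Longrightarrow> L 1 \<ge> 1"
  shows "\<exists>ps. Pgen L n i = pcats (ps @ [loop]) \<and> (\<forall>p\<in>set ps. allowed L n p)"
proof -
  have lp: "pcats [loop] = loop" by (simp add: pcat_def loop_def)
  consider "n = 0" | "n \<ge> 1" "i = 1" | "n \<ge> 1" "i = n + 1" | "n \<ge> 1" "2 \<le> i" "i \<le> n"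
    using assms(1) by linarith
  then show ?thesis
  proof cases
    case 1
    then have "Pgen L n i = pcats (replicate 9 loop @ [loop])"
      using rep_loop_flat[of 9] by (simp add: Pgen_def numeral_eq_Suc)
    then show ?thesis by (auto simp: allowed_def)
  next
    case 2
    let ?c = "cyc L 1"
    let ?k = "2 * (1 + (\<Sum>j=1..n. L j))"
    define XSS where "XSS = map (\<lambda>a. replicate a loop @ [?c, ?c]) [1..<?k + 1]
        @ [[loop]] @ map (\<lambda>j. [cyc L j, cyc L j]) [2..<n+1] @ [[loop]]"
    have gd: "\<forall>xs\<in>set XSS. \<forall>p\<in>set xs. good p"
      by (auto simp: XSS_def loop_good cyc_good)
    have "Pgen L n i = pcats (map pcats XSS)"
    proof -
      have e1: "map (\<lambda>a. pcat (rep a loop) (rep 2 ?c)) [1..<?k + 1]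
          = map (\<lambda>a. pcats (replicate a loop @ [?c, ?c])) [1..<?k + 1]"
        by (intro map_cong refl)
           (rule F_pcats[OF cyc_good])
      have e2: "map (\<lambda>j. rep 2 (cyc L j)) [2..<n+1] = map (\<lambda>j. pcats [cyc L j, cyc L j]) [2..<n+1]"
        by (simp add: rep2_pcats)
      have e3: "Pgen L n i = pcats (map (\<lambda>a. pcat (rep a loop) (rep 2 ?c)) [1..<?k + 1] @ [loop]
           @ map (\<lambda>j. rep 2 (cyc L j)) [2..<n+1] @ [loop])"
        using 2 by (simp add: Pgen_def del: upt_Suc)
      show ?thesis unfolding e3 e1 e2 XSS_def by (simp only: map_append map_map comp_def list.map lp)
    qed
    also have "\<dots> = pcats (concat XSS)" using gd by (rule pcats_concat)
    also have "concat XSS = (concat (map (\<lambda>a. replicate a loop @ [?c, ?c]) [1..<?k + 1])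
        @ [loop] @ concat (map (\<lambda>j. [cyc L j, cyc L j]) [2..<n+1])) @ [loop]"
      by (simp add: XSS_def del: upt_Suc)
    finally have eq: "Pgen L n i = pcats ((concat (map (\<lambda>a. replicate a loop @ [?c, ?c]) [1..<?k + 1])
        @ [loop] @ concat (map (\<lambda>j. [cyc L j, cyc L j]) [2..<n+1])) @ [loop])" .
    have "\<forall>p\<in>set (concat (map (\<lambda>a. replicate a loop @ [?c, ?c]) [1..<?k + 1])
        @ [loop] @ concat (map (\<lambda>j. [cyc L j, cyc L j]) [2..<n+1])). allowed L n p"
    proof
      fix p assume "p \<in> set (concat (map (\<lambda>a. replicate a loop @ [?c, ?c]) [1..<?k + 1])
        @ [loop] @ concat (map (\<lambda>j. [cyc L j, cyc L j]) [2..<n+1]))"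
      then consider "p = loop" | "p = ?c" | j where "j \<in> set [2..<n+1]" "p = cyc L j"
        by (auto simp del: upt_Suc split: if_splits)
      then show "allowed L n p"
      proof cases
        case (3 j) then have "1 \<le> j \<and> j \<le> n" by (simp del: upt_Suc)
        with 3 show ?thesis unfolding allowed_def by blast
      qed (use 2 in \<open>auto simp: allowed_def\<close>)
    qed
    with eq show ?thesis by blast
  next
    case 3
    have "L 1 \<le> (\<Sum>j=1..n. L j)" using 3 by (intro member_le_sum) auto
    then have "0 < (n + 2)^2 * (\<Sum>j=1..n. L j)" using 3 assms(2) by simp
    then obtain N where N: "(n + 2)^2 * (\<Sum>j=1..n. L j) = Suc N"
      using gr0_conv_Suc by blast
    have "Pgen L n i = pcats (replicate N loop @ [loop])"
      using 3 N rep_loop_flat[of N] by (simp add: Pgen_def)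
    then show ?thesis by (auto simp: allowed_def)
  next
    case 4
    define XSS where "XSS = [[loop]] @ map (\<lambda>j. [cyc L j, cyc L j]) [i..<n+1] @ [[loop]]"
    have gd: "\<forall>xs\<in>set XSS. \<forall>p\<in>set xs. good p"
      by (auto simp: XSS_def loop_good cyc_good)
    have "Pgen L n i = pcats (map pcats XSS)"
    proof -
      have e2: "map (\<lambda>j. rep 2 (cyc L j)) [i..<n+1] = map (\<lambda>j. pcats [cyc L j, cyc L j]) [i..<n+1]"
        by (simp add: rep2_pcats)
      have e3: "Pgen L n i = pcats ([loop]
           @ map (\<lambda>j. rep 2 (cyc L j)) [i..<n+1] @ [loop])"
        using 4 by (simp add: Pgen_def del: upt_Suc)
      show ?thesis unfolding e3 e2 XSS_def by (simp only: map_append map_map comp_def list.map lp)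
    qed
    also have "\<dots> = pcats (concat XSS)" using gd by (rule pcats_concat)
    also have "concat XSS = ([loop] @ concat (map (\<lambda>j. [cyc L j, cyc L j]) [i..<n+1])) @ [loop]"
      by (simp add: XSS_def del: upt_Suc)
    finally have eq: "Pgen L n i = pcats (([loop] @ concat (map (\<lambda>j. [cyc L j, cyc L j]) [i..<n+1])) @ [loop])" .
    have "\<forall>p\<in>set ([loop] @ concat (map (\<lambda>j. [cyc L j, cyc L j]) [i..<n+1])). allowed L n p"
    proof
      fix p assume "p \<in> set ([loop] @ concat (map (\<lambda>j. [cyc L j, cyc L j]) [i..<n+1]))"
      then consider "p = loop" | j where "j \<in> set [i..<n+1]" "p = cyc L j" by auto
      then show "allowed L n p"
      proof cases
        case (2 j) then have "1 \<le> j \<and> j \<le> n" using 4 by (simp del: upt_Suc)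
        with 2 show ?thesis unfolding allowed_def by blast
      qed (auto simp: allowed_def)
    qed
    with eq show ?thesis by blast
  qed
qed

lemma flat_props:
  assumes "\<forall>p\<in>set ps. allowed L n p"
  shows "pcats (ps @ [loop]) = pcats ps @ [Base]" and "pcats ps \<noteq> []"
    and "hd (pcats ps) = Base" and "last (pcats ps) = Base"
proof -
  have g: "\<forall>p\<in>set (ps @ [loop]). good p" using assms allowed_good loop_good by auto
  show "pcats (ps @ [loop]) = pcats ps @ [Base]"
    using pcats_append[OF g] by (simp add: pcat_def loop_def)
  show "pcats ps \<noteq> []" "hd (pcats ps) = Base" "last (pcats ps) = Base"
    using pcats_good[of ps] g by auto
qed

lemma flat_shape:
  assumes "\<forall>p\<in>set ps. allowed L n p"
  shows "\<exists>xs. pcats (ps @ [loop]) = Base # xs @ [Base]"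
proof -
  have "pcats ps = Base # tl (pcats ps)" using flat_props[OF assms] by (cases "pcats ps") auto
  then show ?thesis using flat_props(1)[OF assms] by (metis append_Cons)
qed

lemma in_set_tlD: "x \<in> set (tl xs) \<Longrightarrow> x \<in> set xs"
  by (cases xs) auto

lemma set_pcats: "set (pcats ps) \<subseteq> insert Base (\<Union>p\<in>set ps. set p)"
  by (induction ps) (auto simp: pcat_def dest: in_set_tlD)

lemma clen_pos: "1 \<le> n \<Longrightarrow> 1 \<le> i \<Longrightarrow> i \<le> n \<Longrightarrow> 1 \<le> clen n i"
proof (induction n arbitrary: i)
  case 0 then show ?case by simp
next
  case (Suc n)
  show ?case
  proof (cases "n = 0")
    case True
    then show ?thesis by (simp add: Pgen_def rep_loop)
  next
    case False
    then have "1 \<le> clen n 1" using Suc.IH by simp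
    then obtain ps where ps: "Pgen (clen n) n i = pcats (ps @ [loop])" "\<forall>p\<in>set ps. allowed (clen n) n p"
      using Pgen_flat[of n i "clen n"] Suc.prems by auto
    then show ?thesis using flat_shape[OF ps(2)] by auto
  qed
qed

lemma P_flat:
  assumes "n = 0 \<or> (1 \<le> i \<and> i \<le> n + 1)"
  shows "\<exists>ps. P n i = pcats (ps @ [loop]) \<and> (\<forall>p\<in>set ps. allowed (clen n) n p)"
  unfolding P_def using assms clen_pos[of n 1] by (intro Pgen_flat) auto

lemma cyc_V: "1 \<le> j \<Longrightarrow> j \<le> n \<Longrightarrow> set (cyc (clen n) j) \<subseteq> V n"
  by (auto simp: cyc_def V_def)

lemma zip_tl: "(a, b) \<in> set (zip xs (tl xs)) \<longleftrightarrow> (\<exists>t. Suc t < length xs \<and> a = xs ! t \<and> b = xs ! Suc t)"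
  by (auto simp: in_set_zip nth_tl) (metis Suc_less_eq length_tl less_diff_conv nth_tl add_Suc_right add_0_right)

lemma E_iff: "(a, b) \<in> E n \<longleftrightarrow> (a, b) = (Base, Base) \<or>
   (\<exists>i t. 1 \<le> i \<and> i \<le> n \<and> Suc t < length (cyc (clen n) i) \<and>
       a = cyc (clen n) i ! t \<and> b = cyc (clen n) i ! Suc t)"
  unfolding E_def by (auto simp: zip_tl)



abbreviation Rel :: "nat \<Rightarrow> vtx \<Rightarrow> vtx \<Rightarrow> bool" where
  "Rel n a b \<equiv> (a, b) \<in> E n"

lemma Base_E: "(Base, Base) \<in> E n" by (simp add: E_def)

lemma cyc_succ: "1 \<le> j \<Longrightarrow> j \<le> n \<Longrightarrow> successively (Rel n) (cyc (clen n) j)"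
  unfolding successively_conv_nth E_iff by blast

lemma loop_succ: "successively (Rel n) loop"
  by (simp add: loop_def Base_E)

lemma clen_Suc: "clen (Suc n) i = length (P n i) - 1"
  by (simp add: P_def)

declare clen.simps(2)[simp del]

lemma Base_V: "Base \<in> V n" by (simp add: V_def)

lemma allowed_succ: "allowed (clen n) n p \<Longrightarrow> successively (Rel n) p"
  using cyc_succ loop_succ by (auto simp: allowed_def)

definition inrange :: "nat \<Rightarrow> nat \<Rightarrow> bool" where
  "inrange n i \<longleftrightarrow> n = 0 \<or> (1 \<le> i \<and> i \<le> n + 1)"

lemma P_props:
  assumes "inrange n i"
  shows "set (P n i) \<subseteq> V n" and "successively (Rel n) (P n i)"
    and "2 \<le> length (P n i)" and "P n i ! 0 = Base"
    and "P n i ! (length (P n i) - 1) = Base" and "P n i ! (length (P n i) - 2) = Base"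
proof -
  obtain ps where ps: "P n i = pcats (ps @ [loop])" "\<forall>p\<in>set ps. allowed (clen n) n p"
    using P_flat assms unfolding inrange_def by blast
  note fp = flat_props[OF ps(2)]
  have "set (P n i) \<subseteq> insert Base (\<Union>p\<in>set (ps @ [loop]). set p)"
    unfolding ps(1) by (rule set_pcats)
  moreover have "\<forall>p\<in>set (ps @ [loop]). set p \<subseteq> V n"
  proof
    fix p assume "p \<in> set (ps @ [loop])"
    then have "p = loop \<or> (\<exists>j. 1 \<le> j \<and> j \<le> n \<and> p = cyc (clen n) j)"
      using ps(2) by (auto simp: allowed_def)
    then show "set p \<subseteq> V n" using cyc_V Base_V by (auto simp: loop_def)
  qed
  ultimately show "set (P n i) \<subseteq> V n" using Base_V by blast
  have "\<forall>p\<in>set (ps @ [loop]). good p \<and> successively (Rel n) p"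
    using ps(2) allowed_good allowed_succ loop_good loop_succ by auto
  then show "successively (Rel n) (P n i)" unfolding ps(1) by (intro pcats_succ) (auto simp: Base_E)
  obtain ys where ys: "pcats ps = Base # ys" using fp by (cases "pcats ps") auto
  have P: "P n i = Base # ys @ [Base]" using ps(1) fp(1) ys by simp
  show "2 \<le> length (P n i)" "P n i ! 0 = Base" "P n i ! (length (P n i) - 1) = Base"
    using P by (auto simp: nth_append)
  show "P n i ! (length (P n i) - 2) = Base"
  proof (cases "ys = []")
    case True then show ?thesis using P by simp
  next
    case False
    then have "last ys = Base" using fp(4) ys by simp
    then show ?thesis using P False by (simp add: nth_append last_conv_nth)
  qed
qed


lemma phi_V: "v \<in> V (Suc n) \<Longrightarrow> phi n v \<in> V n"
proof -
  assume v: "v \<in> V (Suc n)"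
  show ?thesis
  proof (cases v)
    case Base then show ?thesis by (simp add: V_def)
  next
    case (CV i j)
    with v have "1 \<le> i" "i \<le> Suc n" "j < clen (Suc n) i" by (auto simp: V_def)
    then have "inrange n i" "j < length (P n i)" by (auto simp: inrange_def clen_Suc)
    then have "P n i ! j \<in> set (P n i)" by simp
    then show ?thesis using CV P_props(1)[OF \<open>inrange n i\<close>] by auto
  qed
qed

definition nx :: "nat \<Rightarrow> vtx \<Rightarrow> vtx" where
  "nx n v = (case v of Base \<Rightarrow> Base | CV i j \<Rightarrow> if Suc j < clen n i then CV i (Suc j) else Base)"

lemma E_CV: assumes "CV i j \<in> V n" shows "(CV i j, b) \<in> E n \<longleftrightarrow> b = nx n (CV i j)"
proof -
  from assms have ij: "1 \<le> i" "i \<le> n" "0 < j" "j < clen n i" by (auto simp: V_def)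
  show ?thesis
  proof
    assume "(CV i j, b) \<in> E n"
    then obtain i' t where it: "1 \<le> i'" "i' \<le> n" "Suc t < length (cyc (clen n) i')"
      "CV i j = cyc (clen n) i' ! t" "b = cyc (clen n) i' ! Suc t"
      unfolding E_iff by auto
    have "cyc (clen n) i' ! t = (if 0 < t \<and> t < clen n i' then CV i' t else Base)"
      using it(3) by (intro cyc_nth) simp
    with it(4) have "i' = i \<and> t = j" by (auto split: if_splits)
    then have "b = cyc (clen n) i ! Suc j" using it by simp
    also have "\<dots> = nx n (CV i j)" using ij by (simp add: cyc_nth cyc_length nx_def)
    finally show "b = nx n (CV i j)" .
  next
    assume b: "b = nx n (CV i j)"
    have "Suc j < length (cyc (clen n) i)" using ij by (simp add: cyc_length)
    moreover have "cyc (clen n) i ! j = CV i j" using ij by (simp add: cyc_nth cyc_length)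
    moreover have "cyc (clen n) i ! Suc j = b" using ij b by (simp add: cyc_nth cyc_length nx_def)
    ultimately show "(CV i j, b) \<in> E n" unfolding E_iff using ij
      by (intro disjI2 exI[of _ i] exI[of _ j]) simp
  qed
qed

lemma nx_V: "v \<in> V n \<Longrightarrow> nx n v \<in> V n"
  by (auto simp: V_def nx_def)

lemma phi_cyc:
  assumes "1 \<le> i" "i \<le> Suc n" "t < length (cyc (clen (Suc n)) i)"
  shows "phi n (cyc (clen (Suc n)) i ! t) = P n i ! t"
proof -
  have ir: "inrange n i" using assms by (simp add: inrange_def)
  note pp = P_props[OF ir]
  show ?thesis
  proof (cases "0 < t \<and> t < clen (Suc n) i")
    case True then show ?thesis using assms by (simp add: cyc_nth)
  next
    case False
    then have "cyc (clen (Suc n)) i ! t = Base" using assms(3) by (simp add: cyc_nth)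
    moreover have "P n i ! t = Base"
    proof (cases "t = 0")
      case True then show ?thesis using pp by simp
    next
      case False
      have c: "clen (Suc n) i = length (P n i) - 1" by (rule clen_Suc)
      have "length (cyc (clen (Suc n)) i) = clen (Suc n) i + 1" using c pp(3) by (simp add: cyc_length)
      then have "t = length (P n i) - 1" using False \<open>\<not> (0 < t \<and> t < clen (Suc n) i)\<close> assms(3) c
        by linarith
      then show ?thesis using pp by simp
    qed
    ultimately show ?thesis by simp
  qed
qed

lemma phi_E: assumes "(a, b) \<in> E (Suc n)" shows "(phi n a, phi n b) \<in> E n"
proof -
  from assms consider "a = Base" "b = Base"
    | i t where "1 \<le> i" "i \<le> Suc n" "Suc t < length (cyc (clen (Suc n)) i)"
       "a = cyc (clen (Suc n)) i ! t" "b = cyc (clen (Suc n)) i ! Suc t"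
    unfolding E_iff by auto
  then show ?thesis
  proof cases
    case 1 then show ?thesis by (simp add: Base_E)
  next
    case 2
    then have ir: "inrange n i" by (simp add: inrange_def)
    have "length (cyc (clen (Suc n)) i) = length (P n i)"
      using P_props(3)[OF ir] by (simp add: cyc_length clen_Suc)
    then show ?thesis using 2 phi_cyc[of i n] P_props(2)[OF ir]
      by (simp add: successively_conv_nth)
  qed
qed



definition kk :: "(nat \<Rightarrow> nat) \<Rightarrow> nat \<Rightarrow> nat" where
  "kk L n = 2 * (1 + (\<Sum>j=1..n. L j))"

definition Fp :: "(nat \<Rightarrow> nat) \<Rightarrow> nat \<Rightarrow> vtx list" where
  "Fp L a = pcat (rep a loop) (rep 2 (cyc L 1))"

definition Rp :: "(nat \<Rightarrow> nat) \<Rightarrow> nat \<Rightarrow> vtx list list" where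
  "Rp L n = [loop] @ map (\<lambda>j. rep 2 (cyc L j)) [2..<n+1] @ [loop]"

lemma Pgen1: "1 \<le> n \<Longrightarrow> Pgen L n 1 = pcats (map (Fp L) [1..<kk L n + 1] @ Rp L n)"
  by (simp add: Pgen_def Fp_def[abs_def] Rp_def kk_def del: upt_Suc)

lemma Fp_eq: "Fp L a = replicate (Suc a) Base @ map (CV 1) [1..<L 1] @ [Base] @ map (CV 1) [1..<L 1] @ [Base]"
  by (simp add: Fp_def rep_loop rep2 pcat_def cyc_def)

lemma Fp_good: "good (Fp L a)"
  by (simp add: Fp_eq good_def)

lemma Rp_good: "\<forall>p\<in>set (Rp L n). good p"
  unfolding Rp_def using loop_good rep_good[OF cyc_good] by (simp del: upt_Suc)

lemma kk_pos: "1 \<le> kk L n" by (simp add: kk_def)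

lemma S1: assumes "1 \<le> n" shows "\<exists>ys. Pgen L n 1 = Base # cyc L 1 @ ys"
proof -
  have "[1..<kk L n + 1] = 1 # [2..<kk L n + 1]" using kk_pos[of L n] by (simp add: upt_conv_Cons numeral_2_eq_2 del: upt_Suc)
  then have "Pgen L n 1 = pcats (Fp L 1 # map (Fp L) [2..<kk L n + 1] @ Rp L n)"
    using Pgen1[OF assms] by (simp del: upt_Suc)
  also have "\<dots> = Fp L 1 @ tl (pcats (map (Fp L) [2..<kk L n + 1] @ Rp L n))"
    by (simp only: pcats.simps pcat_def)
  finally show ?thesis by (simp add: Fp_eq cyc_def del: upt_Suc)
qed

lemma S2:
  assumes "1 \<le> n" and pos: "\<And>j. 1 \<le> j \<Longrightarrow> j \<le> n \<Longrightarrow> 1 \<le> L j"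
  shows "\<exists>xs ys. Pgen L n 1 = xs @ cyc L 1 @ ys \<and> 2 * L 1 + length ys \<le> kk L n"
proof -
  let ?k = "kk L n"
  have "[1..<?k + 1] = [1..<?k] @ [?k]" using kk_pos[of L n] by simp
  then have "Pgen L n 1 = pcats (map (Fp L) [1..<?k] @ (Fp L ?k # Rp L n))"
    using Pgen1[OF assms(1)] by simp
  also have "\<dots> = pcats (map (Fp L) [1..<?k]) @ tl (pcats (Fp L ?k # Rp L n))"
    by (rule pcats_append) (use Fp_good Rp_good in auto)
  also have "\<dots> = (pcats (map (Fp L) [1..<?k]) @ replicate ?k Base @ map (CV 1) [1..<L 1])
       @ cyc L 1 @ (tl (pcats (Rp L n)))"
    by (simp add: pcat_def Fp_eq cyc_def)
  finally have eq: "Pgen L n 1 = (pcats (map (Fp L) [1..<?k]) @ replicate ?k Base @ map (CV 1) [1..<L 1])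
       @ cyc L 1 @ (tl (pcats (Rp L n)))" .
  have len: "length (tl (pcats (Rp L n))) = 2 + (\<Sum>j=2..n. 2 * L j)"
  proof -
    have ne: "\<forall>p\<in>set (Rp L n). p \<noteq> []" using Rp_good by (auto simp: good_def)
    have "\<forall>j\<in>set [2..<n+1]. length (rep 2 (cyc L j)) - 1 = 2 * L j"
    proof
      fix j assume "j \<in> set [2..<n+1]"
      then have "1 \<le> L j" using pos by auto
      then show "length (rep 2 (cyc L j)) - 1 = 2 * L j"
        by (simp add: rep_length cyc_length cyc_def)
    qed
    then have "sum_list (map (\<lambda>j. length (rep 2 (cyc L j)) - 1) [2..<n+1]) = sum_list (map (\<lambda>j. 2 * L j) [2..<n+1])"
      by (intro arg_cong[where f=sum_list] map_cong) auto
    also have "\<dots> = (\<Sum>j=2..n. 2 * L j)"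
      by (simp only: sum_set_upt_conv_sum_list_nat[symmetric] set_upt)
         (simp add: atLeastLessThanSuc_atLeastAtMost)
    finally have s: "sum_list (map (\<lambda>j. length (rep 2 (cyc L j)) - 1) [2..<n+1]) = (\<Sum>j=2..n. 2 * L j)" .
    show ?thesis using pcats_length[OF ne] s by (simp add: Rp_def loop_def comp_def del: upt_Suc)
  qed
  have "(\<Sum>j=1..n. L j) = L 1 + (\<Sum>j=2..n. L j)"
    using assms(1) by (simp add: sum.atLeast_Suc_atMost numeral_2_eq_2)
  then have ineq: "2 * L 1 + length (tl (pcats (Rp L n))) \<le> kk L n"
    using len by (simp add: kk_def sum_distrib_left)
  show ?thesis by (rule exI, rule exI, rule conjI, rule eq, rule ineq)
qed


lemma rep_cons: "replicate a x @ x # l = x # replicate a x @ l"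
  by (induction a) auto

lemma S3:
  assumes "1 \<le> n" "1 \<le> a" "a < kk L n"
  shows "\<exists>xs ys. Pgen L n 1 = xs @ cyc L 1 @ replicate a Base @ cyc L 1 @ ys"
proof -
  let ?k = "kk L n"
  let ?B = "map (Fp L) [Suc (Suc a)..<?k + 1] @ Rp L n"
  let ?bt = "map (CV 1) [1..<L 1]"
  have "[1..<?k + 1] = [1..<a] @ [a..<?k + 1]"
    using upt_add_eq_append[of 1 a "?k + 1 - a"] assms by (simp del: upt_Suc)
  also have "[a..<?k + 1] = a # Suc a # [Suc (Suc a)..<?k + 1]"
    using assms by (simp add: upt_conv_Cons del: upt_Suc)
  finally have "Pgen L n 1 = pcats (map (Fp L) [1..<a] @ (Fp L a # Fp L (Suc a) # ?B))"
    using Pgen1[OF assms(1)] by (simp del: upt_Suc)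
  also have "\<dots> = pcats (map (Fp L) [1..<a]) @ tl (pcats (Fp L a # Fp L (Suc a) # ?B))"
    by (rule pcats_append) (use Fp_good Rp_good in \<open>auto simp del: upt_Suc\<close>)
  also have "\<dots> = pcats (map (Fp L) [1..<a]) @ tl (Fp L a @ tl (Fp L (Suc a) @ tl (pcats ?B)))"
    by (simp only: pcats.simps pcat_def)
  also have "\<dots> = (pcats (map (Fp L) [1..<a]) @ replicate a Base @ ?bt) @ cyc L 1 @ replicate a Base @ cyc L 1 @
      (?bt @ [Base] @ tl (pcats ?B))"
    using assms(2) by (cases a) (simp_all add: Fp_eq cyc_def rep_cons del: upt_Suc)
  finally show ?thesis by blast
qed

lemma mem_pcats:
  assumes "v \<noteq> Base" "p \<in> set ps" "v \<in> set p" "\<forall>q\<in>set ps. good q"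
  shows "v \<in> set (pcats ps)"
  using assms
proof (induction ps)
  case Nil then show ?case by simp
next
  case (Cons q ps)
  show ?case
  proof (cases "p = q")
    case True then show ?thesis using Cons.prems by (simp add: pcat_def)
  next
    case False
    then have "v \<in> set (pcats ps)" using Cons by auto
    moreover have "pcats ps \<noteq> [] \<and> hd (pcats ps) = Base" using pcats_good Cons.prems by auto
    ultimately have "v \<in> set (tl (pcats ps))" using Cons.prems(1) by (cases "pcats ps") auto
    then show ?thesis by (simp add: pcat_def)
  qed
qed

lemma S4:
  assumes "1 \<le> n" "v \<in> V n"
  shows "\<exists>j. 0 < j \<and> j < clen (Suc n) 1 \<and> P n 1 ! j = v"
proof -
  have ir: "inrange n 1" by (simp add: inrange_def)
  note pp = P_props[OF ir]
  obtain ys where ys: "P n 1 = Base # cyc (clen n) 1 @ ys"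
    using S1[OF assms(1), of "clen n"] by (auto simp: P_def)
  have cl: "clen (Suc n) 1 = length (P n 1) - 1" by (rule clen_Suc)
  show ?thesis
  proof (cases v)
    case Base
    have "length (cyc (clen n) 1) \<ge> 2" by (simp add: cyc_length)
    then show ?thesis using ys Base cl by (intro exI[of _ 1]) (auto simp: cyc_def)
  next
    case (CV s r)
    with assms have sr: "1 \<le> s" "s \<le> n" "0 < r" "r < clen n s" by (auto simp: V_def)
    have "v \<in> set (P n 1)"
    proof (cases "s = 1")
      case True
      then have "v \<in> set (cyc (clen n) 1)" using sr CV by (auto simp: cyc_def)
      then show ?thesis using ys by simp
    next
      case False
      let ?p = "rep 2 (cyc (clen n) s)"
      have "s \<in> set [2..<n+1]" using sr False by (simp del: upt_Suc)
      then have "?p \<in> set (Rp (clen n) n)" by (auto simp: Rp_def simp del: upt_Suc)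
      moreover have "v \<in> set ?p" using sr CV by (auto simp: rep2 cyc_def)
      moreover have "P n 1 = pcats (map (Fp (clen n)) [1..<kk (clen n) n + 1] @ Rp (clen n) n)"
        using Pgen1[OF assms(1)] by (simp add: P_def)
      moreover have g: "\<forall>q\<in>set (map (Fp (clen n)) [1..<kk (clen n) n + 1] @ Rp (clen n) n). good q"
        using Fp_good Rp_good by (auto simp del: upt_Suc)
      ultimately show ?thesis
        using mem_pcats[of v ?p "map (Fp (clen n)) [1..<kk (clen n) n + 1] @ Rp (clen n) n"] CV
        by (simp del: upt_Suc)
    qed
    then obtain j where j: "j < length (P n 1)" "P n 1 ! j = v" by (auto simp: in_set_conv_nth)
    have "j \<noteq> 0" using j pp(4) CV by (metis vtx.distinct(1))
    moreover have "j \<noteq> length (P n 1) - 1" using j pp(5) CV by (metis vtx.distinct(1))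
    ultimately show ?thesis using j cl by (intro exI[of _ j]) auto
  qed
qed



primrec down :: "nat \<Rightarrow> nat \<Rightarrow> vtx \<Rightarrow> vtx" where
  "down k 0 v = v"
| "down k (Suc d) v = down k d (phi (k + d) v)"

lemma down_Suc': "down k (Suc d) v = phi k (down (Suc k) d v)"
  by (induction d arbitrary: v) simp_all

lemma down_V: "v \<in> V (k + d) \<Longrightarrow> down k d v \<in> V k"
  by (induction d arbitrary: v) (simp_all add: phi_V)

lemma Xsp_V: "x \<in> Xsp \<Longrightarrow> x n \<in> V n" by (simp add: Xsp_def)
lemma Xsp_phi: "x \<in> Xsp \<Longrightarrow> phi n (x (Suc n)) = x n" by (simp add: Xsp_def)

lemma down_X: "x \<in> Xsp \<Longrightarrow> down k d (x (k + d)) = x k"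
  by (induction d) (simp_all add: Xsp_phi)

lemma X_agree:
  assumes "x \<in> Xsp" "y \<in> Xsp" "x M = y M" "k \<le> M"
  shows "x k = y k"
  using down_X[OF assms(1), of k "M - k"] down_X[OF assms(2), of k "M - k"] assms(3,4) by simp

lemma nonBase_up:
  assumes "x \<in> Xsp" "x M \<noteq> Base" "M \<le> n"
  shows "x n \<noteq> Base"
  using assms(3)
proof (induction n rule: dec_induct)
  case base then show ?case using assms(2) .
next
  case (step n)
  then show ?case using Xsp_phi[OF assms(1), of n] by auto
qed

lemma nx_phi:
  assumes v: "v \<in> V (Suc n)" and nb: "phi n v \<noteq> Base"
  shows "phi n (nx (Suc n) v) = nx n (phi n v)"
proof (cases v)
  case Base then show ?thesis using nb by simp
next
  case (CV i j)
  with v have ij: "1 \<le> i" "i \<le> Suc n" "0 < j" "j < clen (Suc n) i" by (auto simp: V_def)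
  then have ir: "inrange n i" by (simp add: inrange_def)
  note pp = P_props[OF ir]
  have cl: "clen (Suc n) i = length (P n i) - 1" by (rule clen_Suc)
  have w: "phi n v = P n i ! j" using CV by simp
  have wV: "P n i ! j \<in> V n" using pp(1) ij cl by (auto intro: nth_mem)
  show ?thesis
  proof (cases "Suc j < clen (Suc n) i")
    case True
    then have e: "(P n i ! j, P n i ! Suc j) \<in> E n"
      using pp(2) cl by (simp add: successively_conv_nth)
    obtain a b where ab: "P n i ! j = CV a b" using nb w by (cases "P n i ! j") auto
    have "P n i ! Suc j = nx n (P n i ! j)" using E_CV[of a b n] wV e ab by simp
    then show ?thesis using True CV by (simp add: nx_def)
  next
    case False
    then have "j = length (P n i) - 2" using ij cl by linarith
    then have "phi n v = Base" using w pp(6) by simp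
    then show ?thesis using nb by simp
  qed
qed

lemma T_step:
  assumes z: "z \<in> Xsp" and nb: "z M \<noteq> Base"
  shows "T z \<in> Xsp \<and> T z M = nx M (z M)"
proof -
  define w where "w = nx M (z M)"
  define y where "y n = (if M \<le> n then nx n (z n) else down n (M - n) w)" for n
  have zV: "\<And>n. z n \<in> V n" using z by (rule Xsp_V)
  have znb: "\<And>n. M \<le> n \<Longrightarrow> z n \<noteq> Base" using nonBase_up[OF z nb] by blast
  have wV: "w \<in> V M" unfolding w_def using zV by (rule nx_V)
  have yV: "y n \<in> V n" for n
  proof (cases "M \<le> n")
    case True then show ?thesis using zV nx_V by (simp add: y_def)
  next
    case False then show ?thesis using down_V[of w n "M - n"] wV by (simp add: y_def)
  qed
  have ylow: "y n = down n (M - n) w" if "n \<le> M" for n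
    using that by (cases "n = M") (simp_all add: y_def w_def)
  have ycoh: "phi n (y (Suc n)) = y n" for n
  proof (cases "M \<le> n")
    case True
    have "phi n (z (Suc n)) \<noteq> Base" using Xsp_phi[OF z] znb True by simp
    then have "phi n (nx (Suc n) (z (Suc n))) = nx n (phi n (z (Suc n)))"
      using zV by (intro nx_phi) auto
    then show ?thesis using True Xsp_phi[OF z] by (simp add: y_def)
  next
    case False
    then have "y n = down n (Suc (M - Suc n)) w" using ylow[of n] by (simp add: Suc_diff_Suc)
    also have "\<dots> = phi n (down (Suc n) (M - Suc n) w)" by (rule down_Suc')
    also have "down (Suc n) (M - Suc n) w = y (Suc n)" using ylow[of "Suc n"] False by simp
    finally show ?thesis by simp
  qed
  have yX: "y \<in> Xsp" using yV ycoh by (simp add: Xsp_def)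
  have yE_hi: "(z n, y n) \<in> E n" if hM: "M \<le> n" for n
  proof -
    obtain a b where ab: "z n = CV a b" using znb[OF hM] by (cases "z n") auto
    then show ?thesis using E_CV[of a b n "y n"] zV[of n] hM by (simp add: y_def)
  qed
  have yE_lo: "\<forall>d \<le> M. (z (M - d), y (M - d)) \<in> E (M - d)"
  proof
    fix d show "d \<le> M \<longrightarrow> (z (M - d), y (M - d)) \<in> E (M - d)"
    proof (induction d)
      case 0 then show ?case using yE_hi by simp
    next
      case (Suc d)
      show ?case
      proof
        assume "Suc d \<le> M"
        then obtain n where n: "M - d = Suc n" "M - Suc d = n" by (metis Suc_diff_Suc less_eq_Suc_le)
        have "(z (Suc n), y (Suc n)) \<in> E (Suc n)" using Suc \<open>Suc d \<le> M\<close> n by simp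
        then have "(phi n (z (Suc n)), phi n (y (Suc n))) \<in> E n" by (rule phi_E)
        then show "(z (M - Suc d), y (M - Suc d)) \<in> E (M - Suc d)"
          using n Xsp_phi[OF z] ycoh by simp
      qed
    qed
  qed
  have yE: "(z n, y n) \<in> E n" for n
  proof (cases "M \<le> n")
    case True then show ?thesis by (rule yE_hi)
  next
    case False
    then show ?thesis using yE_lo[rule_format, of "M - n"] by simp
  qed
  have uniq: "y' = y" if y': "y' \<in> Xsp \<and> (\<forall>n. (z n, y' n) \<in> E n)" for y'
  proof
    fix n
    have hi: "y' m = y m" if hM: "M \<le> m" for m
    proof -
      obtain a b where ab: "z m = CV a b" using znb[OF hM] by (cases "z m") auto
      have "(z m, y' m) \<in> E m" using y' by blast
      then show ?thesis using E_CV[of a b m "y' m"] zV[of m] ab hM by (simp add: y_def)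
    qed
    show "y' n = y n"
    proof (cases "M \<le> n")
      case True then show ?thesis by (rule hi)
    next
      case False
      have "y' n = down n (M - n) (y' (n + (M - n)))" using down_X y' by simp
      also have "\<dots> = down n (M - n) w" using hi[of M] False by (simp add: y_def w_def)
      also have "\<dots> = y n" using ylow False by simp
      finally show ?thesis .
    qed
  qed
  have "T z = y" unfolding T_def
    by (rule the_equality) (use yX yE uniq in auto)
  then show ?thesis using yX by (simp add: y_def w_def)
qed


lemma T_iter:
  assumes z: "z \<in> Xsp" and zM: "z M = CV i j"
  shows "j + k < clen M i \<Longrightarrow> (T ^^ k) z \<in> Xsp \<and> (T ^^ k) z M = CV i (j + k)"
proof (induction k)
  case 0 then show ?case using z zM by simp
next
  case (Suc k)
  then have IH: "(T ^^ k) z \<in> Xsp" "(T ^^ k) z M = CV i (j + k)" by auto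
  have "T ((T ^^ k) z) \<in> Xsp \<and> T ((T ^^ k) z) M = nx M ((T ^^ k) z M)"
    using IH by (intro T_step) auto
  then show ?case using IH Suc.prems by (simp add: nx_def)
qed

lemma clen1_step:
  assumes "1 \<le> K"
  shows "clen (Suc K) 1 \<ge> Suc (clen K 1)"
    and "\<And>r. 0 < r \<Longrightarrow> r < clen K 1 \<Longrightarrow> phi K (CV 1 (Suc r)) = CV 1 r"
proof -
  obtain ys where ys: "P K 1 = Base # cyc (clen K) 1 @ ys"
    using S1[OF assms, of "clen K"] by (auto simp: P_def)
  have pos: "1 \<le> clen K 1" using clen_pos[of K 1] assms by simp
  show "clen (Suc K) 1 \<ge> Suc (clen K 1)" using ys pos by (simp add: clen_Suc cyc_length)
  fix r assume r: "0 < r" "r < clen K 1"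
  have "phi K (CV 1 (Suc r)) = P K 1 ! Suc r" by simp
  also have "\<dots> = cyc (clen K) 1 ! r" using ys r pos by (simp add: nth_append cyc_length)
  also have "\<dots> = CV 1 r" using r pos by (simp add: cyc_nth cyc_length)
  finally show "phi K (CV 1 (Suc r)) = CV 1 r" .
qed

lemma clen_grow: assumes "1 \<le> M" "M \<le> k" shows "clen M 1 + (k - M) \<le> clen k 1"
  using assms(2)
proof (induction k rule: dec_induct)
  case base then show ?case by simp
next
  case (step k)
  then show ?case using clen1_step(1)[of k] assms(1) by (simp add: Suc_diff_le)
qed

lemma lift:
  assumes M: "1 \<le> M" and j: "0 < j" "j < clen M 1"
  shows "\<exists>z\<in>Xsp. z M = CV 1 j"
proof -
  define z where "z k = (if k \<le> M then down k (M - k) (CV 1 j) else CV 1 (j + (k - M)))" for k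
  have CVj: "CV 1 j \<in> V M" using M j by (simp add: V_def)
  have hi: "z k = CV 1 (j + (k - M))" if "M \<le> k" for k
    using that by (cases "k = M") (simp_all add: z_def)
  have hiV: "j + (k - M) < clen k 1" if "M \<le> k" for k
    using clen_grow[OF M that] j by simp
  have zV: "z k \<in> V k" for k
  proof (cases "k \<le> M")
    case True then show ?thesis using down_V[of "CV 1 j" k "M - k"] CVj by (simp add: z_def)
  next
    case False then show ?thesis using hiV[of k] hi[of k] M j by (simp add: V_def)
  qed
  have coh: "phi k (z (Suc k)) = z k" for k
  proof (cases "M \<le> k")
    case True
    have "1 \<le> k" using M True by simp
    have "z (Suc k) = CV 1 (Suc (j + (k - M)))" using hi[of "Suc k"] True by (simp add: Suc_diff_le)
    then show ?thesis using clen1_step(2)[OF \<open>1 \<le> k\<close>, of "j + (k - M)"] hiV[OF True] j hi[OF True] by simp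
  next
    case False
    then have "z k = down k (Suc (M - Suc k)) (CV 1 j)" by (simp add: z_def Suc_diff_Suc)
    also have "\<dots> = phi k (down (Suc k) (M - Suc k) (CV 1 j))" by (rule down_Suc')
    also have "down (Suc k) (M - Suc k) (CV 1 j) = z (Suc k)" using False by (simp add: z_def)
    finally show ?thesis by simp
  qed
  have "z \<in> Xsp" using zV coh by (simp add: Xsp_def)
  moreover have "z M = CV 1 j" by (simp add: z_def)
  ultimately show ?thesis by blast
qed



definition occ :: "nat \<Rightarrow> nat \<Rightarrow> vtx \<Rightarrow> nat \<Rightarrow> bool" where
  "occ m K v r \<longleftrightarrow> 0 < r \<and> r < clen K 1 \<and> down m (K - m) (CV 1 r) = v"

lemma occ_shift:
  assumes "m \<le> K" "1 \<le> K" "P K 1 = xs @ cyc (clen K) 1 @ ys" "occ m K v r"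
  shows "occ m (Suc K) v (length xs + r)"
proof -
  have pos: "1 \<le> clen K 1" using clen_pos[of K 1] assms by simp
  have lc: "length (cyc (clen K) 1) = clen K 1 + 1" using pos by (simp add: cyc_length)
  have r: "0 < r" "r < clen K 1" "down m (K - m) (CV 1 r) = v" using assms(4) by (auto simp: occ_def)
  have "phi K (CV 1 (length xs + r)) = P K 1 ! (length xs + r)" by simp
  also have "\<dots> = cyc (clen K) 1 ! r" using assms(3) r lc by (simp add: nth_append)
  also have "\<dots> = CV 1 r" using r lc by (simp add: cyc_nth)
  finally have ph: "phi K (CV 1 (length xs + r)) = CV 1 r" .
  have "down m (Suc K - m) (CV 1 (length xs + r)) = down m (Suc (K - m)) (CV 1 (length xs + r))"
    using assms(1) by (simp add: Suc_diff_le)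
  also have "\<dots> = down m (K - m) (phi K (CV 1 (length xs + r)))" using assms(1) by simp
  also have "\<dots> = v" using ph r by simp
  finally have d: "down m (Suc K - m) (CV 1 (length xs + r)) = v" .
  have "clen (Suc K) 1 = length xs + clen K 1 + length ys"
    using assms(3) lc by (simp add: clen_Suc)
  then show ?thesis using d r by (simp add: occ_def)
qed

lemma occ_first:
  assumes "m \<le> K" "1 \<le> K" "occ m K v r"
  shows "occ m (Suc K) v (Suc r)"
proof -
  obtain ys where "P K 1 = [Base] @ cyc (clen K) 1 @ ys" using S1[OF assms(2), of "clen K"] by (auto simp: P_def)
  from occ_shift[OF assms(1,2) this assms(3)] show ?thesis by simp
qed

lemma occ_base:
  assumes "1 \<le> m" "v \<in> V m"
  shows "\<exists>r. occ m (Suc m) v r"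
proof -
  obtain j where j: "0 < j" "j < clen (Suc m) 1" "P m 1 ! j = v" using S4[OF assms] by blast
  then have "down m (Suc m - m) (CV 1 j) = v" by simp
  then show ?thesis using j by (auto simp: occ_def)
qed

lemma occ_all:
  assumes "1 \<le> m" "v \<in> V m" "Suc m \<le> K"
  shows "\<exists>r. occ m K v r"
  using assms(3)
proof (induction K rule: dec_induct)
  case base then show ?case using occ_base[OF assms(1,2)] .
next
  case (step K)
  then obtain r where "occ m K v r" by blast
  then show ?case using occ_first[of m K v r] step assms(1) by auto
qed

definition Good :: "nat \<Rightarrow> vtx \<Rightarrow> vtx \<Rightarrow> nat \<Rightarrow> bool" where
  "Good m u w n \<longleftrightarrow> (\<exists>M j. m \<le> M \<and> 1 \<le> M \<and> occ m M u j \<and> occ m M w (j + n))"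

lemma D_exists:
  assumes m: "1 \<le> m" and u: "u \<in> V m" and w: "w \<in> V m" and K: "Suc m \<le> K"
  shows "\<exists>D. 1 \<le> D \<and> D \<le> kk (clen K) K \<and>
     (\<forall>a. 1 \<le> a \<longrightarrow> a < kk (clen (Suc K)) (Suc K) \<longrightarrow> Good m u w (D + a))"
proof -
  obtain p where p: "occ m K u p" using occ_all[OF m u K] by blast
  obtain q where q: "occ m K w q" using occ_all[OF m w K] by blast
  have K1: "1 \<le> K" "m \<le> K" using K m by auto
  have pos: "\<And>j. 1 \<le> j \<Longrightarrow> j \<le> K \<Longrightarrow> 1 \<le> clen K j" using clen_pos K1 by blast
  obtain xs ys where xy: "P K 1 = xs @ cyc (clen K) 1 @ ys" "2 * clen K 1 + length ys \<le> kk (clen K) K"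
    using S2[OF K1(1), of "clen K", OF pos] by (auto simp: P_def)
  define u' where "u' = length xs + p"
  have ou: "occ m (Suc K) u u'" unfolding u'_def by (rule occ_shift[OF K1(2,1) xy(1) p])
  have ow: "occ m (Suc K) w (Suc q)" by (rule occ_first[OF K1(2,1) q])
  have lc: "length (cyc (clen K) 1) = clen K 1 + 1" using pos[of 1] K1 by (simp add: cyc_length)
  have l': "clen (Suc K) 1 = length xs + clen K 1 + length ys" using xy(1) lc by (simp add: clen_Suc)
  have pq: "0 < p" "p < clen K 1" "q < clen K 1" using p q by (auto simp: occ_def)
  define D where "D = clen (Suc K) 1 - u' + 1 + Suc q"
  have D1: "1 \<le> D" by (simp add: D_def)
  have D2: "D \<le> kk (clen K) K" using xy(2) l' pq unfolding D_def u'_def by linarith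
  have "Good m u w (D + a)" if a: "1 \<le> a" "a < kk (clen (Suc K)) (Suc K)" for a
  proof -
    obtain xs2 ys2 where xy2: "P (Suc K) 1 = xs2 @ cyc (clen (Suc K)) 1 @ replicate a Base @ cyc (clen (Suc K)) 1 @ ys2"
      using S3[of "Suc K" a "clen (Suc K)"] a by (auto simp: P_def)
    have s1: "1 \<le> Suc K" "m \<le> Suc K" using K1 by auto
    have o1: "occ m (Suc (Suc K)) u (length xs2 + u')"
      by (rule occ_shift[OF s1(2) s1(1) _ ou, of xs2 "replicate a Base @ cyc (clen (Suc K)) 1 @ ys2"]) (use xy2 in simp)
    have o2: "occ m (Suc (Suc K)) w (length (xs2 @ cyc (clen (Suc K)) 1 @ replicate a Base) + Suc q)"
      by (rule occ_shift[OF s1(2) s1(1) _ ow, of "xs2 @ cyc (clen (Suc K)) 1 @ replicate a Base" ys2]) (use xy2 in simp)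
    have pos': "1 \<le> clen (Suc K) 1" using clen_pos[of "Suc K" 1] by simp
    have u'l: "u' < clen (Suc K) 1" using ou by (simp add: occ_def)
    have e: "length (xs2 @ cyc (clen (Suc K)) 1 @ replicate a Base) + Suc q = (length xs2 + u') + (D + a)"
      using pos' u'l by (simp add: cyc_length D_def)
    have "occ m (Suc (Suc K)) w ((length xs2 + u') + (D + a))" using o2 unfolding e .
    then show ?thesis using o1 s1 unfolding Good_def
      by (rule_tac exI[where x="Suc (Suc K)"], rule_tac exI[where x="length xs2 + u'"]) auto
  qed
  then show ?thesis using D1 D2 by blast
qed


lemma kk_ge: "1 \<le> N \<Longrightarrow> 2 * L 1 \<le> kk L N"
proof -
  assume "1 \<le> N"
  then have "L 1 \<le> (\<Sum>j=1..N. L j)" by (intro member_le_sum) auto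
  then show ?thesis by (simp add: kk_def)
qed

lemma Good_cofinite:
  assumes m: "1 \<le> m" and u: "u \<in> V m" and w: "w \<in> V m"
  shows "\<exists>N. \<forall>n\<ge>N. Good m u w n"
proof -
  have "\<forall>K. \<exists>D. Suc m \<le> K \<longrightarrow> (1 \<le> D \<and> D \<le> kk (clen K) K \<and>
     (\<forall>a. 1 \<le> a \<longrightarrow> a < kk (clen (Suc K)) (Suc K) \<longrightarrow> Good m u w (D + a)))"
    using D_exists[OF m u w] by blast
  from choice[OF this] obtain Df where Df0: "\<forall>K. Suc m \<le> K \<longrightarrow> (1 \<le> Df K \<and> Df K \<le> kk (clen K) K \<and>
     (\<forall>a. 1 \<le> a \<longrightarrow> a < kk (clen (Suc K)) (Suc K) \<longrightarrow> Good m u w (Df K + a)))"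
    by blast
  have Df1: "1 \<le> Df K" "Df K \<le> kk (clen K) K" if "Suc m \<le> K" for K using Df0 that by blast+
  have Df2: "Good m u w (Df K + a)" if "Suc m \<le> K" "1 \<le> a" "a < kk (clen (Suc K)) (Suc K)" for K a
    using Df0 that by blast
  have cover: "\<forall>n. Df (Suc m) + 1 \<le> n \<longrightarrow> n < Df K + kk (clen (Suc K)) (Suc K) \<longrightarrow> Good m u w n"
    if "Suc m \<le> K" for K
    using that
  proof (induction K rule: dec_induct)
    case base
    show ?case
    proof (intro allI impI)
      fix n assume n: "Df (Suc m) + 1 \<le> n" "n < Df (Suc m) + kk (clen (Suc (Suc m))) (Suc (Suc m))"
      have "Good m u w (Df (Suc m) + (n - Df (Suc m)))" using n by (intro Df2) auto
      then show "Good m u w n" using n by simp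
    qed
  next
    case (step K)
    show ?case
    proof (intro allI impI)
      fix n assume n: "Df (Suc m) + 1 \<le> n" "n < Df (Suc K) + kk (clen (Suc (Suc K))) (Suc (Suc K))"
      show "Good m u w n"
      proof (cases "n < Df K + kk (clen (Suc K)) (Suc K)")
        case True then show ?thesis using step.IH n by blast
      next
        case False
        have d1: "1 \<le> Df K" using Df1 step.hyps by blast
        have d2: "Df (Suc K) \<le> kk (clen (Suc K)) (Suc K)" using Df1[of "Suc K"] step.hyps by simp
        have "Good m u w (Df (Suc K) + (n - Df (Suc K)))"
          using step.hyps False n d1 d2 by (intro Df2) auto
        then show ?thesis using False d1 d2 by simp
      qed
    qed
  qed
  show ?thesis
  proof (intro exI allI impI)
    fix n assume n: "Df (Suc m) + 1 \<le> n"
    define K where "K = Suc m + n"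
    have "clen 1 1 + (Suc K - 1) \<le> clen (Suc K) 1" by (rule clen_grow) auto
    then have "n < clen (Suc K) 1" by (simp add: K_def)
    moreover have "2 * clen (Suc K) 1 \<le> kk (clen (Suc K)) (Suc K)" by (rule kk_ge) simp
    ultimately have "n < Df K + kk (clen (Suc K)) (Suc K)" by linarith
    then show "Good m u w n" using cover[of K] n by (simp add: K_def)
  qed
qed

lemma cyl:
  assumes "open_X U" "x \<in> U"
  shows "\<exists>m0. \<forall>m\<ge>m0. \<forall>y\<in>Xsp. y m = x m \<longrightarrow> y \<in> U"
proof -
  have UX: "U \<subseteq> Xsp" using assms(1) by (simp add: open_X_def)
  have "\<forall>x\<in>U. \<exists>e>0. \<forall>y\<in>Xsp. dist_X x y < e \<longrightarrow> y \<in> U" using assms(1) by (simp add: open_X_def)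
  then have "\<exists>e>0. \<forall>y\<in>Xsp. dist_X x y < e \<longrightarrow> y \<in> U" using assms(2) by (rule bspec)
  then obtain e where e: "e > 0" "\<forall>y\<in>Xsp. dist_X x y < e \<longrightarrow> y \<in> U" by blast
  obtain m0 where "(1/2::real) ^ m0 < e" using real_arch_pow_inv[OF e(1), of "1/2"] by auto
  then have m0: "inverse ((2::real) ^ m0) < e" by (simp add: power_one_over inverse_eq_divide)
  have "y \<in> U" if m: "m0 \<le> m" and y: "y \<in> Xsp" "y m = x m" for m y
  proof (cases "x = y")
    case True then show ?thesis using assms(2) by simp
  next
    case False
    then have ex: "\<exists>i. x i \<noteq> y i" by auto
    define l where "l = (LEAST i. x i \<noteq> y i)"
    have l: "x l \<noteq> y l" unfolding l_def by (rule LeastI_ex[OF ex])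
    have "m < l"
    proof (rule ccontr)
      assume "\<not> m < l"
      then have "l \<le> m" by simp
      have "x l = y l" by (rule X_agree[of x y m l]) (use UX assms(2) y \<open>l \<le> m\<close> in auto)
      then show False using l by simp
    qed
    have "dist_X x y = 2 powr (- real l)" using False by (simp add: dist_X_def l_def)
    also have "\<dots> = inverse (2 ^ l)" by (simp add: powr_minus powr_realpow)
    also have "\<dots> \<le> inverse (2 ^ m0)" using \<open>m < l\<close> m by (simp add: le_imp_inverse_le)
    finally have "dist_X x y < e" using m0 by simp
    then show ?thesis using e y by blast
  qed
  then show ?thesis by blast
qed

theorem lemma3p5:
  assumes "open_X U" and "U \<noteq> {}" and "open_X W" and "W \<noteq> {}"
  shows "\<exists>N. \<forall>n\<ge>N. (T ^^ n) ` U \<inter> W \<noteq> {}"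
proof -
  obtain x where x: "x \<in> U" using assms(2) by blast
  obtain x' where x': "x' \<in> W" using assms(4) by blast
  have xX: "x \<in> Xsp" "x' \<in> Xsp" using x x' assms(1,3) by (auto simp: open_X_def)
  obtain m1 where m1: "\<forall>m\<ge>m1. \<forall>y\<in>Xsp. y m = x m \<longrightarrow> y \<in> U" using cyl[OF assms(1) x] by blast
  obtain m2 where m2: "\<forall>m\<ge>m2. \<forall>y\<in>Xsp. y m = x' m \<longrightarrow> y \<in> W" using cyl[OF assms(3) x'] by blast
  define m where "m = max 1 (max m1 m2)"
  have m: "1 \<le> m" "m1 \<le> m" "m2 \<le> m" by (auto simp: m_def)
  obtain N where N: "\<forall>n\<ge>N. Good m (x m) (x' m) n"
    using Good_cofinite[OF m(1) Xsp_V[OF xX(1)] Xsp_V[OF xX(2)]] by blast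
  show ?thesis
  proof (intro exI allI impI)
    fix n assume "N \<le> n"
    then obtain M j where Mj: "m \<le> M" "1 \<le> M" "occ m M (x m) j" "occ m M (x' m) (j + n)"
      using N unfolding Good_def by blast
    have j: "0 < j" "j < clen M 1" "j + n < clen M 1" using Mj by (auto simp: occ_def)
    obtain z where z: "z \<in> Xsp" "z M = CV 1 j" using lift[OF Mj(2) j(1,2)] by blast
    have "z m = down m (M - m) (z (m + (M - m)))" using down_X[OF z(1)] by simp
    also have "\<dots> = x m" using z(2) Mj(1,3) by (simp add: occ_def)
    finally have zU: "z \<in> U" using m1 m z(1) by blast
    have Tz: "(T ^^ n) z \<in> Xsp" "(T ^^ n) z M = CV 1 (j + n)" using T_iter[OF z, of n] j by auto
    have "(T ^^ n) z m = down m (M - m) ((T ^^ n) z (m + (M - m)))" using down_X[OF Tz(1)] by simp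
    also have "\<dots> = x' m" using Tz(2) Mj(1,4) by (simp add: occ_def)
    finally have "(T ^^ n) z \<in> W" using m2 m Tz(1) by blast
    then show "(T ^^ n) ` U \<inter> W \<noteq> {}" using zU by blast
  qed
qed

end
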